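(* Let $p$ be an $m$-dimensional subspace of the real projective space $P^n$ and $p^*$ an $(n-m-1)$-dimensional subspace with $p\cap p^*=\emptyset$, belonging to a normalized domain of the Grassmannian $G(m,n)$ (notation in the context). Let $(p',p^{*\prime})$ be the infinitesimally close $m$-pair, $p'=(A_0+dA_0)\wedge\dots\wedge(A_m+dA_m)$, $p^{*\prime}=(A_{m+1}+dA_{m+1})\wedge\dots\wedge(A_n+dA_n)$, and let $W$ be the cross-ratio of the $m$-pairs $(p,p^* )$ and $(p',p^{*\prime})$. Then the quadratic form $g=\omega_i^\alpha\omega_\alpha^i$ satisfies $$ g=\omega_i^\alpha\omega_\alpha^i=(m+1)\,\mathrm{pr.p.}\Bigl[\log\Bigl(\tfrac{1}{m+1}\,\mathrm{tr}\,W\Bigr)\Bigr]. $$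
   Context: Index ranges: $0\le\xi,\eta,\zeta\le n$; $0\le\alpha,\beta,\gamma\le m$; $m+1\le i,j,k\le n$; summation over repeated indices. A normalized domain: an open domain $U$ of the Grassmannian $G(m,n)$ of $m$-planes of $P^n$, together with a differentiable map $\nu$ assigning to each $p\in U$ an $(n-m-1)$-plane $p^*$ with $p\cap p^*=\emptyset$; the pair $(p,p^* )$ is called an $m$-pair. To each $m$-pair one associates moving point frames $\{A_\xi\}$ with $A_\alpha\in p$, $A_i\in p^*$, $p=A_0\wedge\dots\wedge A_m$, $p^*=A_{m+1}\wedge\dots\wedge A_n$, and $dA_\xi=\omega_\xi^\eta A_\eta$, where the 1-forms satisfy $d\omega_\xi^\eta=\omega_\xi^\zeta\wedge\omega_\zeta^\eta$. The forms $\omega_\alpha^i$ are the basis forms on $U$, and the normalization gives $\omega_i^\alpha=\lambda_{ij}^{\alpha\beta}\omega_\beta^j$. Matrix coordinates of an $m$-plane: the $(n+1)\times(m+1)$ matrix whose columns are coordinates (w.r.t. the frame $\{A_\xi\}$) of $m+1$ points spanning it; tangential matrix coordinates of an $(n-m-1)$-plane: the $(m+1)\times(n+1)$ matrix whose rows are coefficients of $m+1$ independent linear equations defining it. If $X,Y$ are matrix coordinates of $p,p'$ and $U,V$ tangential matrix coordinates of $p^*,p^{*\prime}$, the cross-ratio of the $m$-pairs $(p,p^* )$, $(p',p^{*\prime})$ is $W=X(UX)^{-1}(UY)(VY)^{-1}V$. Here $\mathrm{pr.p.}$ denotes the principal part, i.e. the lowest-order nonvanishing term of the expansion of the expression in the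 entries of the matrix $(\omega_\xi^\eta)$ (second order terms here, higher-order terms discarded). *)

theory Defs
  imports Complex_Main "Jordan_Normal_Form.Matrix"
begin

text \<open>All coordinates are taken w.r.t. the moving frame A_0..A_n, so A_xi has coordinate
  vector e_xi in R^(n+1). The 1-forms are represented by om xi eta = omega_xi^eta
  (dA_xi = omega_xi^eta A_eta), i.e. coordinates of dA_xi form column xi of the matrix
  with entry (eta,xi) = om xi eta.\<close>

definition kd :: "nat \<Rightarrow> nat \<Rightarrow> real" where
  "kd a b = (if a = b then 1 else 0)"

definition base_p :: "nat \<Rightarrow> nat \<Rightarrow> real mat" where
  "base_p n m = mat (n+1) (m+1) (\<lambda>(r,c). kd r c)"

definition base_pstar :: "nat \<Rightarrow> nat \<Rightarrow> real mat" where
  "base_pstar n m = mat (n+1) (n-m) (\<lambda>(r,c). kd r (m+1+c))"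

text \<open>columns = coordinates of A_alpha + dA_alpha, spanning p'\<close>
definition base_p' :: "nat \<Rightarrow> nat \<Rightarrow> (nat \<Rightarrow> nat \<Rightarrow> real) \<Rightarrow> real mat" where
  "base_p' n m om = mat (n+1) (m+1) (\<lambda>(r,c). kd r c + om c r)"

text \<open>columns = coordinates of A_i + dA_i, spanning p*'\<close>
definition base_pstar' :: "nat \<Rightarrow> nat \<Rightarrow> (nat \<Rightarrow> nat \<Rightarrow> real) \<Rightarrow> real mat" where
  "base_pstar' n m om = mat (n+1) (n-m) (\<lambda>(r,c). kd r (m+1+c) + om (m+1+c) r)"

definition colspace :: "real mat \<Rightarrow> real vec set" where
  "colspace A = {A *\<^sub>v y | y. y \<in> carrier_vec (dim_col A)}"

definition is_matrix_coords :: "nat \<Rightarrow> nat \<Rightarrow> real mat \<Rightarrow> real mat \<Rightarrow> bool" where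
  "is_matrix_coords n m X B \<longleftrightarrow> X \<in> carrier_mat (n+1) (m+1)
     \<and> (\<forall>y \<in> carrier_vec (m+1). X *\<^sub>v y = 0\<^sub>v (n+1) \<longrightarrow> y = 0\<^sub>v (m+1))
     \<and> colspace X = colspace B"

definition is_tangential_coords :: "nat \<Rightarrow> nat \<Rightarrow> real mat \<Rightarrow> real mat \<Rightarrow> bool" where
  "is_tangential_coords n m U C \<longleftrightarrow> U \<in> carrier_mat (m+1) (n+1)
     \<and> (\<forall>y \<in> carrier_vec (m+1). transpose_mat U *\<^sub>v y = 0\<^sub>v (n+1) \<longrightarrow> y = 0\<^sub>v (m+1))
     \<and> {x \<in> carrier_vec (n+1). U *\<^sub>v x = 0\<^sub>v (m+1)} = colspace C"

definition minv :: "real mat \<Rightarrow> real mat" where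
  "minv A = (SOME B. B \<in> carrier_mat (dim_row A) (dim_row A) \<and>
                     A * B = 1\<^sub>m (dim_row A) \<and> B * A = 1\<^sub>m (dim_row A))"

definition mtrace :: "real mat \<Rightarrow> real" where
  "mtrace A = (\<Sum>i<dim_row A. A $$ (i,i))"

definition cross_ratio :: "real mat \<Rightarrow> real mat \<Rightarrow> real mat \<Rightarrow> real mat \<Rightarrow> real mat" where
  "cross_ratio X U Y V = X * minv (U * X) * (U * Y) * minv (V * Y) * V"

definition gform :: "nat \<Rightarrow> nat \<Rightarrow> (nat \<Rightarrow> nat \<Rightarrow> real) \<Rightarrow> real" where
  "gform n m om = (\<Sum>i\<in>{m+1..n}. \<Sum>\<alpha>\<in>{0..m}. om i \<alpha> * om \<alpha> i)"

definition omsq :: "nat \<Rightarrow> (nat \<Rightarrow> nat \<Rightarrow> real) \<Rightarrow> real" where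
  "omsq n om = (\<Sum>\<xi>\<in>{0..n}. \<Sum>\<eta>\<in>{0..n}. (om \<xi> \<eta>)\<^sup>2)"

end

theory Submission imports Defs "Jordan_Normal_Form.Determinant" begin

lemma mat_eq_vecI:
  fixes A B :: "'a::comm_ring_1 mat"
  assumes A: "A \<in> carrier_mat r c" and B: "B \<in> carrier_mat r c"
    and h: "\<And>v. v \<in> carrier_vec c \<Longrightarrow> A *\<^sub>v v = B *\<^sub>v v"
  shows "A = B"
proof (rule eq_matI)
  fix i j assume i: "i < dim_row B" and j: "j < dim_col B"
  have "A $$ (i,j) = (A *\<^sub>v unit_vec c j) $ i" using A B i j by simp
  also have "\<dots> = (B *\<^sub>v unit_vec c j) $ i" using h[of "unit_vec c j"] by simp
  also have "\<dots> = B $$ (i,j)" using A B i j by simp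
  finally show "A $$ (i,j) = B $$ (i,j)" .
qed (use A B in auto)

lemma inj_square_minv:
  fixes A :: "real mat"
  assumes A: "A \<in> carrier_mat k k"
    and inj: "\<And>y. y \<in> carrier_vec k \<Longrightarrow> A *\<^sub>v y = 0\<^sub>v k \<Longrightarrow> y = 0\<^sub>v k"
  shows "minv A \<in> carrier_mat k k \<and> A * minv A = 1\<^sub>m k \<and> minv A * A = 1\<^sub>m k"
proof -
  have "det A \<noteq> 0" using det_0_iff_vec_prod_zero[OF A] inj by auto
  from det_non_zero_imp_unit[OF A this, of "()"] obtain B where
    "B \<in> carrier_mat k k" "A*B = 1\<^sub>m k" "B*A = 1\<^sub>m k"
    unfolding Units_def ring_mat_def by auto
  then have "\<exists>B. B \<in> carrier_mat (dim_row A) (dim_row A) \<and> A * B = 1\<^sub>m (dim_row A) \<and> B * A = 1\<^sub>m (dim_row A)"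
    using A by auto
  from someI_ex[OF this] show ?thesis using A unfolding minv_def by auto
qed

lemma mult_zero_vec_mat[simp]:
  fixes A :: "'a::comm_ring_1 mat"
  assumes "A \<in> carrier_mat a b" shows "A *\<^sub>v 0\<^sub>v b = 0\<^sub>v a"
  by (rule eq_vecI, insert assms, auto)

lemma mult3_vec:
  assumes "A \<in> carrier_mat a b" "C \<in> carrier_mat b c" "B \<in> carrier_mat c d" "v \<in> carrier_vec d"
  shows "(A * C * B) *\<^sub>v v = A *\<^sub>v (C *\<^sub>v (B *\<^sub>v v))"
proof -
  have "(A * C * B) *\<^sub>v v = (A * C) *\<^sub>v (B *\<^sub>v v)"
    by (rule assoc_mult_mat_vec[of _ a c], insert assms, auto)
  also have "\<dots> = A *\<^sub>v (C *\<^sub>v (B *\<^sub>v v))"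
    by (rule assoc_mult_mat_vec[of _ a b], insert assms, auto)
  finally show ?thesis .
qed

lemma proj_lemma:
  fixes A B :: "real mat"
  assumes A: "A \<in> carrier_mat d k" and B: "B \<in> carrier_mat k d"
    and injA: "\<And>y. y \<in> carrier_vec k \<Longrightarrow> A *\<^sub>v y = 0\<^sub>v d \<Longrightarrow> y = 0\<^sub>v k"
    and disj: "\<And>y. y \<in> carrier_vec k \<Longrightarrow> B *\<^sub>v (A *\<^sub>v y) = 0\<^sub>v k \<Longrightarrow> A *\<^sub>v y = 0\<^sub>v d"
  shows "\<And>y. y \<in> carrier_vec k \<Longrightarrow> (A * minv (B * A) * B) *\<^sub>v (A *\<^sub>v y) = A *\<^sub>v y"
    and "\<And>z. z \<in> carrier_vec d \<Longrightarrow> B *\<^sub>v z = 0\<^sub>v k \<Longrightarrow> (A * minv (B * A) * B) *\<^sub>v z = 0\<^sub>v d"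
proof -
  have BA: "B * A \<in> carrier_mat k k" using A B by simp
  have "minv (B * A) \<in> carrier_mat k k \<and> (B * A) * minv (B * A) = 1\<^sub>m k \<and> minv (B * A) * (B * A) = 1\<^sub>m k"
  proof (rule inj_square_minv[OF BA])
    fix y assume y: "y \<in> carrier_vec k" and "(B * A) *\<^sub>v y = 0\<^sub>v k"
    then have "B *\<^sub>v (A *\<^sub>v y) = 0\<^sub>v k" using A B by simp
    then have "A *\<^sub>v y = 0\<^sub>v d" using disj y by blast
    then show "y = 0\<^sub>v k" using injA y by blast
  qed
  then have C: "minv (B * A) \<in> carrier_mat k k" and CBA: "minv (B * A) * (B * A) = 1\<^sub>m k" by auto
  show "(A * minv (B * A) * B) *\<^sub>v (A *\<^sub>v y) = A *\<^sub>v y" if y: "y \<in> carrier_vec k" for y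
  proof -
    have "(A * minv (B * A) * B) *\<^sub>v (A *\<^sub>v y) = A *\<^sub>v (minv (B * A) *\<^sub>v (B *\<^sub>v (A *\<^sub>v y)))"
      using A B C y by (intro mult3_vec) auto
    also have "\<dots> = A *\<^sub>v (minv (B * A) *\<^sub>v ((B * A) *\<^sub>v y))"
      using A B C y by simp
    also have "\<dots> = A *\<^sub>v ((minv (B * A) * (B * A)) *\<^sub>v y)"
      using assoc_mult_mat_vec[OF C BA y] assoc_mult_mat_vec[OF B A y] by simp
    also have "\<dots> = A *\<^sub>v y" using CBA y by simp
    finally show ?thesis .
  qed
  show "(A * minv (B * A) * B) *\<^sub>v z = 0\<^sub>v d" if z: "z \<in> carrier_vec d" "B *\<^sub>v z = 0\<^sub>v k" for z
  proof -
    have "(A * minv (B * A) * B) *\<^sub>v z = A *\<^sub>v (minv (B * A) *\<^sub>v (B *\<^sub>v z))"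
      using A B C z by (intro mult3_vec) auto
    also have "\<dots> = 0\<^sub>v d" using z A C by simp
    finally show ?thesis .
  qed
qed

definition Nm :: "nat \<Rightarrow> (nat \<Rightarrow> nat \<Rightarrow> real) \<Rightarrow> real mat" where
  "Nm n om = mat (n+1) (n+1) (\<lambda>(r,c). om c r)"
definition Mm :: "nat \<Rightarrow> (nat \<Rightarrow> nat \<Rightarrow> real) \<Rightarrow> real mat" where
  "Mm n om = 1\<^sub>m (n+1) + Nm n om"
definition Em :: "nat \<Rightarrow> nat \<Rightarrow> real mat" where
  "Em n m = mat (n+1) (n+1) (\<lambda>(r,c). if r = c \<and> r \<le> m then 1 else 0)"

lemma carriers[simp]:
  "Nm n om \<in> carrier_mat (n+1) (n+1)" "Mm n om \<in> carrier_mat (n+1) (n+1)"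
  "Em n m \<in> carrier_mat (n+1) (n+1)" "base_p n m \<in> carrier_mat (n+1) (m+1)"
  "base_pstar n m \<in> carrier_mat (n+1) (n-m)"
  "base_p' n m om \<in> carrier_mat (n+1) (m+1)" "base_pstar' n m om \<in> carrier_mat (n+1) (n-m)"
  by (auto simp: Nm_def Mm_def Em_def base_p_def base_pstar_def base_p'_def base_pstar'_def)

lemma dims[simp]: "dim_row (Nm n om) = n+1" "dim_col (Nm n om) = n+1"
  "dim_row (Mm n om) = n+1" "dim_col (Mm n om) = n+1"
  "dim_row (Em n m) = n+1" "dim_col (Em n m) = n+1"
  "dim_row (base_p n m) = n+1" "dim_col (base_p n m) = m+1"
  "dim_row (base_pstar n m) = n+1" "dim_col (base_pstar n m) = n-m"
  by (auto simp: Nm_def Mm_def Em_def base_p_def base_pstar_def)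

lemma mult_index':
  assumes "A \<in> carrier_mat a b" "B \<in> carrier_mat b c" "i < a" "j < c"
  shows "(A * B) $$ (i,j) = (\<Sum>k<b. A $$ (i,k) * B $$ (k,j))"
  using assms by (auto simp: scalar_prod_def lessThan_atLeast0 intro!: sum.cong)

lemma mult_vec_index':
  assumes "A \<in> carrier_mat a b" "v \<in> carrier_vec b" "i < a"
  shows "(A *\<^sub>v v) $ i = (\<Sum>k<b. A $$ (i,k) * v $ k)"
  using assms by (auto simp: scalar_prod_def lessThan_atLeast0 intro!: sum.cong)

lemma Mm_index: "i < n+1 \<Longrightarrow> j < n+1 \<Longrightarrow> Mm n om $$ (i,j) = kd i j + om j i"
  by (simp add: Mm_def Nm_def kd_def)

lemma sum_kd: "(\<Sum>k<N. f k * kd k c) = (if c < N then f c else 0)"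
  by (simp add: kd_def if_distrib cong: if_cong)

lemma base_p'_eq: assumes "m < n" shows "base_p' n m om = Mm n om * base_p n m"
proof (rule eq_matI)
  fix i j assume i: "i < dim_row (Mm n om * base_p n m)" and j: "j < dim_col (Mm n om * base_p n m)"
  have "(Mm n om * base_p n m) $$ (i,j) = (\<Sum>k<n+1. Mm n om $$ (i,k) * kd k j)"
    using i j by (subst mult_index'[of _ "n+1" "n+1" _ "m+1"]) (auto simp: base_p_def)
  also have "\<dots> = Mm n om $$ (i,j)" using i j assms by (simp add: sum_kd)
  finally show "base_p' n m om $$ (i,j) = (Mm n om * base_p n m) $$ (i,j)"
    using i j assms by (simp add: Mm_index base_p'_def)
qed (auto simp: base_p'_def)

lemma base_pstar'_eq: assumes "m < n" shows "base_pstar' n m om = Mm n om * base_pstar n m"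
proof (rule eq_matI)
  fix i j assume i: "i < dim_row (Mm n om * base_pstar n m)" and j: "j < dim_col (Mm n om * base_pstar n m)"
  have "(Mm n om * base_pstar n m) $$ (i,j) = (\<Sum>k<n+1. Mm n om $$ (i,k) * kd k (m+1+j))"
    using i j by (subst mult_index'[of _ "n+1" "n+1" _ "n-m"]) (auto simp: base_pstar_def)
  also have "\<dots> = Mm n om $$ (i,m+1+j)" using i j assms by (simp add: sum_kd)
  finally show "base_pstar' n m om $$ (i,j) = (Mm n om * base_pstar n m) $$ (i,j)"
    using i j assms by (simp add: Mm_index base_pstar'_def)
qed (auto simp: base_pstar'_def)

lemma base_p_mult: assumes "y \<in> carrier_vec (m+1)" "m < n"
  shows "base_p n m *\<^sub>v y = vec (n+1) (\<lambda>r. if r \<le> m then y$r else 0)"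
proof (rule eq_vecI)
  fix r assume r: "r < dim_vec (vec (n+1) (\<lambda>r. if r \<le> m then y$r else 0))"
  have "(base_p n m *\<^sub>v y) $ r = (\<Sum>k<m+1. y $ k * kd r k)"
    using r assms by (subst mult_vec_index'[of _ "n+1" "m+1"]) (auto simp: base_p_def mult.commute)
  also have "\<dots> = (\<Sum>k<m+1. y $ k * kd k r)" by (simp add: kd_def eq_commute)
  also have "\<dots> = (if r \<le> m then y$r else 0)" by (simp add: sum_kd)
  finally show "(base_p n m *\<^sub>v y) $ r = vec (n+1) (\<lambda>r. if r \<le> m then y$r else 0) $ r"
    using r by simp
qed (simp add: base_p_def)

lemma colspace_base_p: assumes "m < n"
  shows "z \<in> colspace (base_p n m) \<longleftrightarrow> z \<in> carrier_vec (n+1) \<and> (\<forall>j. m < j \<and> j \<le> n \<longrightarrow> z$j = 0)"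
proof
  assume "z \<in> colspace (base_p n m)"
  then obtain y where y: "y \<in> carrier_vec (m+1)" and z: "z = base_p n m *\<^sub>v y"
    unfolding colspace_def by (auto simp: base_p_def)
  show "z \<in> carrier_vec (n+1) \<and> (\<forall>j. m < j \<and> j \<le> n \<longrightarrow> z$j = 0)"
    using base_p_mult[OF y assms] z by auto
next
  assume z: "z \<in> carrier_vec (n+1) \<and> (\<forall>j. m < j \<and> j \<le> n \<longrightarrow> z$j = 0)"
  let ?y = "vec (m+1) (\<lambda>c. z$c)"
  have "base_p n m *\<^sub>v ?y = z"
    using z assms by (subst base_p_mult) (auto intro!: eq_vecI)
  then show "z \<in> colspace (base_p n m)"
    unfolding colspace_def by (auto simp: base_p_def intro!: exI[of _ ?y])
qed

lemma base_pstar_mult: assumes "y \<in> carrier_vec (n-m)" "m < n"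
  shows "base_pstar n m *\<^sub>v y = vec (n+1) (\<lambda>r. if m < r then y$(r-m-1) else 0)"
proof (rule eq_vecI)
  fix r assume r: "r < dim_vec (vec (n+1) (\<lambda>r. if m < r then y$(r-m-1) else 0))"
  have "(base_pstar n m *\<^sub>v y) $ r = (\<Sum>k<n-m. (if k = r - m - 1 \<and> m < r then y $ k else 0))"
    using r assms by (subst mult_vec_index'[of _ "n+1" "n-m"]) (auto simp: base_pstar_def kd_def intro!: sum.cong)
  also have "\<dots> = (if m < r then y$(r-m-1) else 0)" using r assms by (auto simp: sum.delta)
  finally show "(base_pstar n m *\<^sub>v y) $ r = vec (n+1) (\<lambda>r. if m < r then y$(r-m-1) else 0) $ r"
    using r by simp
qed (simp add: base_pstar_def)

lemma colspace_base_pstar: assumes "m < n"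
  shows "z \<in> colspace (base_pstar n m) \<longleftrightarrow> z \<in> carrier_vec (n+1) \<and> (\<forall>j. j \<le> m \<longrightarrow> z$j = 0)"
proof
  assume "z \<in> colspace (base_pstar n m)"
  then obtain y where y: "y \<in> carrier_vec (n-m)" and z: "z = base_pstar n m *\<^sub>v y"
    unfolding colspace_def by (auto simp: base_pstar_def)
  show "z \<in> carrier_vec (n+1) \<and> (\<forall>j. j \<le> m \<longrightarrow> z$j = 0)"
    using base_pstar_mult[OF y assms] z assms by auto
next
  assume z: "z \<in> carrier_vec (n+1) \<and> (\<forall>j. j \<le> m \<longrightarrow> z$j = 0)"
  let ?y = "vec (n-m) (\<lambda>c. z$(m+1+c))"
  have "base_pstar n m *\<^sub>v ?y = z"
    using z assms by (subst base_pstar_mult) (auto intro!: eq_vecI)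
  then show "z \<in> colspace (base_pstar n m)"
    unfolding colspace_def by (auto simp: base_pstar_def intro!: exI[of _ ?y])
qed

definition l1 :: "real mat \<Rightarrow> real" where
  "l1 A = (\<Sum>i<dim_row A. \<Sum>j<dim_col A. \<bar>A $$ (i,j)\<bar>)"
definition vl1 :: "real vec \<Rightarrow> real" where
  "vl1 v = (\<Sum>i<dim_vec v. \<bar>v $ i\<bar>)"

lemma l1_nonneg: "0 \<le> l1 A"
  unfolding l1_def by (intro sum_nonneg) auto

lemma row_le_l1: assumes "k < dim_row B" shows "(\<Sum>j<dim_col B. \<bar>B $$ (k,j)\<bar>) \<le> l1 B"
  unfolding l1_def using assms
  by (intro member_le_sum[where f = "\<lambda>k. (\<Sum>j<dim_col B. \<bar>B $$ (k,j)\<bar>)"]) (auto intro: sum_nonneg)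

lemma vl1_entry: assumes "k < dim_vec v" shows "\<bar>v $ k\<bar> \<le> vl1 v"
  unfolding vl1_def using assms by (intro member_le_sum) auto

lemma l1_mult: assumes A: "A \<in> carrier_mat a b" and B: "B \<in> carrier_mat b c"
  shows "l1 (A * B) \<le> l1 A * l1 B"
proof -
  have "l1 (A * B) = (\<Sum>i<a. \<Sum>j<c. \<bar>\<Sum>k<b. A $$ (i,k) * B $$ (k,j)\<bar>)"
    unfolding l1_def using A B by (intro sum.cong refl) (auto simp del: index_mult_mat simp: mult_index'[OF A B] index_mult_mat(2,3))
  also have "\<dots> \<le> (\<Sum>i<a. \<Sum>j<c. \<Sum>k<b. \<bar>A $$ (i,k)\<bar> * \<bar>B $$ (k,j)\<bar>)"
    by (intro sum_mono) (auto simp: abs_mult[symmetric] intro: sum_abs[THEN order_trans])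
  also have "\<dots> = (\<Sum>i<a. \<Sum>k<b. \<bar>A $$ (i,k)\<bar> * (\<Sum>j<c. \<bar>B $$ (k,j)\<bar>))"
    by (simp add: sum_distrib_left sum.swap[of _ "{..<c}"])
  also have "\<dots> \<le> (\<Sum>i<a. \<Sum>k<b. \<bar>A $$ (i,k)\<bar> * l1 B)"
    using B row_le_l1[of _ B] by (intro sum_mono mult_left_mono) auto
  also have "\<dots> = l1 A * l1 B"
    using A by (simp add: l1_def sum_distrib_right)
  finally show ?thesis .
qed

lemma vl1_mult: assumes A: "A \<in> carrier_mat a b" and v: "v \<in> carrier_vec b"
  shows "vl1 (A *\<^sub>v v) \<le> l1 A * vl1 v"
proof -
  have "vl1 (A *\<^sub>v v) = (\<Sum>i<a. \<bar>\<Sum>k<b. A $$ (i,k) * v $ k\<bar>)"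
    unfolding vl1_def using A v by (intro sum.cong refl) (auto simp del: index_mult_mat_vec simp: mult_vec_index'[OF A v])
  also have "\<dots> \<le> (\<Sum>i<a. \<Sum>k<b. \<bar>A $$ (i,k)\<bar> * \<bar>v $ k\<bar>)"
    by (intro sum_mono) (auto simp: abs_mult[symmetric] intro: sum_abs[THEN order_trans])
  also have "\<dots> \<le> (\<Sum>i<a. \<Sum>k<b. \<bar>A $$ (i,k)\<bar> * vl1 v)"
    using v vl1_entry[of _ v] by (intro sum_mono mult_left_mono) auto
  also have "\<dots> = l1 A * vl1 v"
    using A by (simp add: l1_def sum_distrib_right)
  finally show ?thesis .
qed

lemma l1_add: assumes "A \<in> carrier_mat a b" "B \<in> carrier_mat a b"
  shows "l1 (A + B) \<le> l1 A + l1 B"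
  using assms unfolding l1_def
  by (auto simp: sum.distrib[symmetric] intro!: sum_mono abs_triangle_ineq)

lemma l1_minus: assumes "A \<in> carrier_mat a b" "B \<in> carrier_mat a b"
  shows "l1 (A - B) \<le> l1 A + l1 B"
  using assms unfolding l1_def
  by (auto simp: sum.distrib[symmetric] intro!: sum_mono abs_triangle_ineq4)

lemma l1_one: "l1 (1\<^sub>m d) = real d"
proof -
  have "l1 (1\<^sub>m d) = (\<Sum>i<d. \<Sum>j<d. if j = i then 1 else 0)"
    unfolding l1_def by (auto intro!: sum.cong)
  then show ?thesis by simp
qed

lemma mtrace_abs: assumes "A \<in> carrier_mat d d" shows "\<bar>mtrace A\<bar> \<le> l1 A"
proof -
  have "\<bar>mtrace A\<bar> \<le> (\<Sum>i<d. \<bar>A $$ (i,i)\<bar>)"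
    unfolding mtrace_def using assms by (auto intro: sum_abs[THEN order_trans])
  also have "\<dots> \<le> (\<Sum>i<d. \<Sum>j<d. \<bar>A $$ (i,j)\<bar>)"
    by (intro sum_mono member_le_sum[where f = "\<lambda>j. \<bar>A $$ (_,j)\<bar>"]) auto
  finally show ?thesis unfolding l1_def using assms by auto
qed

lemma mtrace_minus: assumes "A \<in> carrier_mat d d" "B \<in> carrier_mat d d"
  shows "mtrace (A - B) = mtrace A - mtrace B"
  using assms unfolding mtrace_def by (auto simp: sum_subtractf[symmetric] intro!: sum.cong)

lemma mtrace_add: assumes "A \<in> carrier_mat d d" "B \<in> carrier_mat d d"
  shows "mtrace (A + B) = mtrace A + mtrace B"
  using assms unfolding mtrace_def by (auto simp: sum.distrib[symmetric] intro!: sum.cong)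

lemma l1_Nm: "l1 (Nm n om) \<le> real (n+1)^2 * sqrt (omsq n om)"
proof -
  have e: "\<bar>om c r\<bar> \<le> sqrt (omsq n om)" if "c < n+1" "r < n+1" for c r
  proof -
    have "(om c r)\<^sup>2 \<le> (\<Sum>\<eta>\<in>{0..n}. (om c \<eta>)\<^sup>2)"
      using that by (intro member_le_sum) auto
    also have "\<dots> \<le> omsq n om" unfolding omsq_def
      using that by (intro member_le_sum[where f = "\<lambda>\<xi>. \<Sum>\<eta>\<in>{0..n}. (om \<xi> \<eta>)\<^sup>2"]) (auto intro: sum_nonneg)
    finally have "\<bar>om c r\<bar>\<^sup>2 \<le> omsq n om" by simp
    then show ?thesis by (rule real_le_rsqrt)
  qed
  have "l1 (Nm n om) = (\<Sum>r<n+1. \<Sum>c<n+1. \<bar>om c r\<bar>)"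
    unfolding l1_def Nm_def by (auto intro!: sum.cong)
  also have "\<dots> \<le> (\<Sum>r<n+1. \<Sum>c<n+1. sqrt (omsq n om))"
    using e by (intro sum_mono) auto
  also have "\<dots> = real (n+1)^2 * sqrt (omsq n om)" by (simp add: power2_eq_square)
  finally show ?thesis .
qed

lemma Mm_inj: assumes s: "l1 (Nm n om) < 1" and v: "v \<in> carrier_vec (n+1)"
  and Mv: "Mm n om *\<^sub>v v = 0\<^sub>v (n+1)"
  shows "v = 0\<^sub>v (n+1)"
proof -
  have "Mm n om *\<^sub>v v = v + Nm n om *\<^sub>v v"
    unfolding Mm_def using v by (subst add_mult_distrib_mat_vec[of _ "n+1" "n+1"]) auto
  then have z: "v + Nm n om *\<^sub>v v = 0\<^sub>v (n+1)" using Mv by simp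
  have vi: "v $ i = - ((Nm n om *\<^sub>v v) $ i)" if "i < n+1" for i
  proof -
    have "(v + Nm n om *\<^sub>v v) $ i = 0" using z that by simp
    then show ?thesis using that v by (simp del: index_mult_mat_vec)
  qed
  have "vl1 v = vl1 (Nm n om *\<^sub>v v)"
    unfolding vl1_def using v vi by (auto intro!: sum.cong)
  also have "\<dots> \<le> l1 (Nm n om) * vl1 v" using v by (intro vl1_mult) auto
  finally have "vl1 v \<le> l1 (Nm n om) * vl1 v" .
  moreover have "0 \<le> vl1 v" unfolding vl1_def by (intro sum_nonneg) auto
  ultimately have "vl1 v = 0"
  proof -
    assume a: "vl1 v \<le> l1 (Nm n om) * vl1 v" "0 \<le> vl1 v"
    show "vl1 v = 0"
    proof (rule ccontr)
      assume "vl1 v \<noteq> 0"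
      then have "0 < vl1 v" using a by simp
      then have "l1 (Nm n om) * vl1 v < 1 * vl1 v" using s by (intro mult_strict_right_mono) auto
      then show False using a by simp
    qed
  qed
  then have "\<bar>v $ i\<bar> \<le> 0" if "i < n+1" for i using vl1_entry[of i v] that v by simp
  then have "\<bar>v $ i\<bar> = 0" if "i < n+1" for i using that by (meson abs_ge_zero order_antisym)
  then show ?thesis using v by (auto intro!: eq_vecI)
qed




lemma K_eq: fixes N K :: "real mat" assumes N: "N \<in> carrier_mat d d" and K: "K \<in> carrier_mat d d"
  and MK: "(1\<^sub>m d + N) * K = 1\<^sub>m d"
  shows "K = 1\<^sub>m d - N * K"
proof -
  have "(1\<^sub>m d + N) * K = K + N * K"
    using add_mult_distrib_mat[of "1\<^sub>m d" d d N K d] N K left_mult_one_mat[OF K] by simp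
  then have KN: "K + N * K = 1\<^sub>m d" using MK by simp
  show ?thesis
  proof (rule eq_matI)
    fix i j assume i: "i < dim_row (1\<^sub>m d - N * K)" and j: "j < dim_col (1\<^sub>m d - N * K)"
    have "(K + N * K) $$ (i,j) = 1\<^sub>m d $$ (i,j)" using KN by simp
    then have "K $$ (i,j) + (N * K) $$ (i,j) = 1\<^sub>m d $$ (i,j)"
      using i j N K by (simp del: index_mult_mat index_one_mat)
    then show "K $$ (i,j) = (1\<^sub>m d - N * K) $$ (i,j)"
      using i j N K by (simp del: index_mult_mat index_one_mat)
  qed (use N K in auto)
qed

lemma trace_step: fixes A N K :: "real mat"
  assumes A: "A \<in> carrier_mat d d" and N: "N \<in> carrier_mat d d" and K: "K \<in> carrier_mat d d"
    and KK: "K = 1\<^sub>m d - N * K"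
  shows "mtrace (A * K) = mtrace A - mtrace (A * N * K)"
proof -
  have "A * K = A * (1\<^sub>m d - N * K)" using KK by (rule arg_cong[where f = "\<lambda>x. A * x"])
  also have "\<dots> = A * 1\<^sub>m d - A * (N * K)"
    by (rule mult_minus_distrib_mat[OF A]) (use N K in auto)
  also have "\<dots> = A - A * N * K" using A N K by (simp add: assoc_mult_mat)
  finally have "A * K = A - A * N * K" .
  then show ?thesis using A N K by (simp add: mtrace_minus[of _ d])
qed

lemma trace_identity: fixes E N K :: "real mat"
  assumes E: "E \<in> carrier_mat d d" and N: "N \<in> carrier_mat d d" and K: "K \<in> carrier_mat d d"
    and EE: "E * E = E" and KK: "K = 1\<^sub>m d - N * K"
  shows "mtrace (E * ((1\<^sub>m d + N) * E * K)) = mtrace E + (mtrace (E*N*N) - mtrace (E*N*E*N))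
     + (mtrace (E*N*E) - mtrace (E*N)) - mtrace (E*N*N*N*K) + mtrace (E*N*E*N*N*K)"
proof -
  have cm: "A * B \<in> carrier_mat d d" if "A \<in> carrier_mat d d" "B \<in> carrier_mat d d" for A B
    using that by simp
  have assoc: "A * B * C = A * (B * C)" if "A \<in> carrier_mat d d" "B \<in> carrier_mat d d" "C \<in> carrier_mat d d" for A B C
    using that by (simp add: assoc_mult_mat)
  have distL: "(A + B) * C = A * C + B * C" if "A \<in> carrier_mat d d" "B \<in> carrier_mat d d" "C \<in> carrier_mat d d" for A B C
    using that by (simp add: add_mult_distrib_mat)
  have distR: "C * (A + B) = C * A + C * B" if "A \<in> carrier_mat d d" "B \<in> carrier_mat d d" "C \<in> carrier_mat d d" for A B C
    using that by (simp add: mult_add_distrib_mat)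
  have EE': "E * (E * X) = E * X" if "X \<in> carrier_mat d d" for X
    using that E EE assoc[of E E X] by simp
  have ad: "A + B \<in> carrier_mat d d" if "A \<in> carrier_mat d d" "B \<in> carrier_mat d d" for A B
    using that by simp
  have eq: "E * ((1\<^sub>m d + N) * E * K) = E * K + E * N * E * K"
  proof -
    have NE: "N * E \<in> carrier_mat d d" "E * K \<in> carrier_mat d d" "N * E * K \<in> carrier_mat d d"
      using E N K by (auto intro!: cm)
    have s1: "(1\<^sub>m d + N) * E = E + N * E"
      using distL[of "1\<^sub>m d" N E] E N left_mult_one_mat[OF E] by simp
    have s2: "(E + N * E) * K = E * K + N * E * K"
      using distL[of E "N * E" K] E NE K by simp
    have s3: "E * (E * K + N * E * K) = E * (E * K) + E * (N * E * K)"
      using distR[of "E * K" "N * E * K" E] E NE by simp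
    have s4: "E * (N * E * K) = E * N * E * K"
      by (simp only: assoc[OF E NE(1) K, symmetric] assoc[OF E N E, symmetric])
    show ?thesis unfolding s1 s2 s3 s4 EE'[OF K] ..
  qed
  have t1: "mtrace (E*K) = mtrace E - mtrace (E*N*K)" by (rule trace_step[OF E N K KK])
  have t2: "mtrace (E*N*K) = mtrace (E*N) - mtrace (E*N*N*K)" by (rule trace_step[OF _ N K KK]) (intro cm E N)+
  have t3: "mtrace (E*N*N*K) = mtrace (E*N*N) - mtrace (E*N*N*N*K)" by (rule trace_step[OF _ N K KK]) (intro cm E N)+
  have t4: "mtrace (E*N*E*K) = mtrace (E*N*E) - mtrace (E*N*E*N*K)" by (rule trace_step[OF _ N K KK]) (intro cm E N)+
  have t5: "mtrace (E*N*E*N*K) = mtrace (E*N*E*N) - mtrace (E*N*E*N*N*K)" by (rule trace_step[OF _ N K KK]) (intro cm E N)+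
  have "mtrace (E * ((1\<^sub>m d + N) * E * K)) = mtrace (E*K) + mtrace (E*N*E*K)"
    unfolding eq by (rule mtrace_add[of _ d]) (intro cm E N K)+
  then show ?thesis using t1 t2 t3 t4 t5 by linarith
qed

lemma Em_left: assumes A: "A \<in> carrier_mat (n+1) (n+1)" and i: "i < n+1" and j: "j < n+1"
  shows "(Em n m * A) $$ (i,j) = (if i \<le> m then A $$ (i,j) else 0)"
proof -
  have "(Em n m * A) $$ (i,j) = (\<Sum>k<n+1. Em n m $$ (i,k) * A $$ (k,j))"
    by (rule mult_index') (use A i j in auto)
  also have "\<dots> = (\<Sum>k<n+1. (if k = i then (if i \<le> m then A $$ (i,j) else 0) else 0))"
    by (rule sum.cong[OF refl]) (use i j in \<open>auto simp: Em_def\<close>)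
  also have "\<dots> = (if i \<le> m then A $$ (i,j) else 0)" by (subst sum.delta) (use i in auto)
  finally show ?thesis .
qed

lemma Em_right: assumes A: "A \<in> carrier_mat (n+1) (n+1)" and i: "i < n+1" and j: "j < n+1"
  shows "(A * Em n m) $$ (i,j) = (if j \<le> m then A $$ (i,j) else 0)"
proof -
  have "(A * Em n m) $$ (i,j) = (\<Sum>k<n+1. A $$ (i,k) * Em n m $$ (k,j))"
    by (rule mult_index') (use A i j in auto)
  also have "\<dots> = (\<Sum>k<n+1. (if k = j then (if j \<le> m then A $$ (i,j) else 0) else 0))"
    by (rule sum.cong[OF refl]) (use i j in \<open>auto simp: Em_def\<close>)
  also have "\<dots> = (if j \<le> m then A $$ (i,j) else 0)" by (subst sum.delta) (use j in auto)
  finally show ?thesis .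
qed

lemma Em_vec: assumes v: "v \<in> carrier_vec (n+1)" and i: "i < n+1"
  shows "(Em n m *\<^sub>v v) $ i = (if i \<le> m then v $ i else 0)"
proof -
  have "(Em n m *\<^sub>v v) $ i = (\<Sum>k<n+1. Em n m $$ (i,k) * v $ k)"
    by (rule mult_vec_index') (use v i in auto)
  also have "\<dots> = (\<Sum>k<n+1. (if k = i then (if i \<le> m then v $ i else 0) else 0))"
    by (rule sum.cong[OF refl]) (use i in \<open>auto simp: Em_def\<close>)
  also have "\<dots> = (if i \<le> m then v $ i else 0)" by (subst sum.delta) (use i in auto)
  finally show ?thesis .
qed

lemma mtrace_Em: assumes "m < n" shows "mtrace (Em n m) = real (m+1)"
proof -
  have "mtrace (Em n m) = (\<Sum>i<n+1. if i \<le> m then 1 else 0)"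
    unfolding mtrace_def by (auto simp: Em_def intro!: sum.cong)
  also have "\<dots> = (\<Sum>i\<in>{..<n+1} \<inter> {i. i \<le> m}. 1)"
    by (simp only: sum.If_cases finite_lessThan) simp
  also have "{..<n+1} \<inter> {i. i \<le> m} = {..m}" using assms by auto
  finally show ?thesis by simp
qed


lemma Em_Em: "Em n m * Em n m = Em n m"
proof (rule eq_matI)
  fix i j assume "i < dim_row (Em n m)" "j < dim_col (Em n m)"
  then show "(Em n m * Em n m) $$ (i,j) = Em n m $$ (i,j)"
    using Em_left[of "Em n m" n i j m] by (auto simp: Em_def simp del: index_mult_mat)
qed auto

lemma l1_Em: "l1 (Em n m) \<le> real (n+1)"
proof -
  have "l1 (Em n m) \<le> l1 (1\<^sub>m (n+1))"
    unfolding l1_def dims index_one_mat(2,3) by (intro sum_mono) (auto simp: Em_def)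
  then show ?thesis by (simp add: l1_one)
qed

lemma proj_minv_carrier:
  fixes A B :: "real mat"
  assumes A: "A \<in> carrier_mat d k" and B: "B \<in> carrier_mat k d"
    and injA: "\<And>y. y \<in> carrier_vec k \<Longrightarrow> A *\<^sub>v y = 0\<^sub>v d \<Longrightarrow> y = 0\<^sub>v k"
    and disj: "\<And>y. y \<in> carrier_vec k \<Longrightarrow> B *\<^sub>v (A *\<^sub>v y) = 0\<^sub>v k \<Longrightarrow> A *\<^sub>v y = 0\<^sub>v d"
  shows "minv (B * A) \<in> carrier_mat k k"
proof -
  have BA: "B * A \<in> carrier_mat k k" using A B by simp
  have "minv (B * A) \<in> carrier_mat k k \<and> (B * A) * minv (B * A) = 1\<^sub>m k \<and> minv (B * A) * (B * A) = 1\<^sub>m k"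
  proof (rule inj_square_minv[OF BA])
    fix y assume y: "y \<in> carrier_vec k" and "(B * A) *\<^sub>v y = 0\<^sub>v k"
    then have "B *\<^sub>v (A *\<^sub>v y) = 0\<^sub>v k" using A B by simp
    then have "A *\<^sub>v y = 0\<^sub>v d" using disj y by blast
    then show "y = 0\<^sub>v k" using injA y by blast
  qed
  then show ?thesis by simp
qed

lemma colspace_iff: "z \<in> colspace A \<longleftrightarrow> (\<exists>y \<in> carrier_vec (dim_col A). z = A *\<^sub>v y)"
  unfolding colspace_def by blast

lemma colspace_mult: assumes A: "A \<in> carrier_mat a b" and B: "B \<in> carrier_mat b c"
  shows "z \<in> colspace (A * B) \<longleftrightarrow> (\<exists>w \<in> colspace B. z = A *\<^sub>v w)"
proof
  assume "z \<in> colspace (A * B)"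
  then obtain y where y: "y \<in> carrier_vec c" and z: "z = (A * B) *\<^sub>v y"
    unfolding colspace_iff using A B by auto
  have "B *\<^sub>v y \<in> colspace B" unfolding colspace_iff using B y by auto
  moreover have "z = A *\<^sub>v (B *\<^sub>v y)" using z A B y by simp
  ultimately show "\<exists>w \<in> colspace B. z = A *\<^sub>v w" by blast
next
  assume "\<exists>w \<in> colspace B. z = A *\<^sub>v w"
  then obtain w where w: "w \<in> colspace B" and z: "z = A *\<^sub>v w" by blast
  from w obtain y where y: "y \<in> carrier_vec c" and wy: "w = B *\<^sub>v y"
    unfolding colspace_iff using B by auto
  have "z = (A * B) *\<^sub>v y" using z wy A B y by simp
  moreover have "y \<in> carrier_vec (dim_col (A * B))" using y B by simp
  ultimately show "z \<in> colspace (A * B)" unfolding colspace_iff by blast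
qed

lemma colspace_carrier: assumes "A \<in> carrier_mat a b" "z \<in> colspace A" shows "z \<in> carrier_vec a"
  using assms unfolding colspace_iff by auto


lemma Em_vec_carrier: "v \<in> carrier_vec (n+1) \<Longrightarrow> Em n m *\<^sub>v v \<in> carrier_vec (n+1)"
  by (rule mult_mat_vec_carrier[OF carriers(3)])

lemma split_vec: assumes m: "m < n" and v: "v \<in> carrier_vec (n+1)"
  shows "Em n m *\<^sub>v v \<in> colspace (base_p n m)"
    and "v - Em n m *\<^sub>v v \<in> colspace (base_pstar n m)"
    and "v = Em n m *\<^sub>v v + (v - Em n m *\<^sub>v v)"
proof -
  have ec: "Em n m *\<^sub>v v \<in> carrier_vec (n+1)" using Em_vec_carrier[OF v] .
  have e1: "(Em n m *\<^sub>v v) $ j = 0" if "m < j" "j \<le> n" for j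
    using Em_vec[OF v, of j m] that by simp
  have e2: "(v - Em n m *\<^sub>v v) $ j = 0" if "j \<le> m" for j
  proof -
    have j: "j < n+1" using that m by simp
    have "(v - Em n m *\<^sub>v v) $ j = v $ j - (Em n m *\<^sub>v v) $ j"
      using j ec by (simp only: index_minus_vec carrier_vecD)
    then show ?thesis using Em_vec[OF v j, of m] that by simp
  qed
  show "Em n m *\<^sub>v v \<in> colspace (base_p n m)"
    unfolding colspace_base_p[OF m] using ec e1 by blast
  have "v - Em n m *\<^sub>v v \<in> carrier_vec (n+1)" using v ec by simp
  then show "v - Em n m *\<^sub>v v \<in> colspace (base_pstar n m)"
    unfolding colspace_base_pstar[OF m] using e2 by blast
  show "v = Em n m *\<^sub>v v + (v - Em n m *\<^sub>v v)"
    using v ec by (intro eq_vecI) (simp_all del: index_mult_mat_vec)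
qed

lemma disjoint_p: assumes m: "m < n" and "z \<in> colspace (base_p n m)" "z \<in> colspace (base_pstar n m)"
  shows "z = 0\<^sub>v (n+1)"
proof -
  have z: "z \<in> carrier_vec (n+1)" "\<And>j. m < j \<and> j \<le> n \<longrightarrow> z$j = 0" "\<And>j. j \<le> m \<longrightarrow> z$j = 0"
    using assms unfolding colspace_base_p[OF m] colspace_base_pstar[OF m] by blast+
  show ?thesis
  proof (rule eq_vecI)
    fix i assume "i < dim_vec (0\<^sub>v (n+1) :: real vec)"
    then have i: "i \<le> n" by simp
    show "z $ i = 0\<^sub>v (n+1) $ i"
    proof (cases "i \<le> m")
      case True then show ?thesis using z(3)[of i] i by simp
    next
      case False then show ?thesis using z(2)[of i] i by simp
    qed
  qed (use z in simp)
qed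

lemma P1_lemma: assumes m: "m < n"
  and X: "is_matrix_coords n m X (base_p n m)" and U: "is_tangential_coords n m U (base_pstar n m)"
  shows "X * minv (U * X) * U = Em n m" and "minv (U * X) \<in> carrier_mat (m+1) (m+1)"
proof -
  from X have Xc: "X \<in> carrier_mat (n+1) (m+1)"
    and Xinj: "\<And>y. y \<in> carrier_vec (m+1) \<Longrightarrow> X *\<^sub>v y = 0\<^sub>v (n+1) \<Longrightarrow> y = 0\<^sub>v (m+1)"
    and Xcs: "colspace X = colspace (base_p n m)" unfolding is_matrix_coords_def by auto
  from U have Uc: "U \<in> carrier_mat (m+1) (n+1)"
    and Uker: "{x \<in> carrier_vec (n+1). U *\<^sub>v x = 0\<^sub>v (m+1)} = colspace (base_pstar n m)"
    unfolding is_tangential_coords_def by auto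
  have inX: "X *\<^sub>v y \<in> colspace X" if "y \<in> carrier_vec (m+1)" for y
    unfolding colspace_def using that Xc by auto
  have disj: "X *\<^sub>v y = 0\<^sub>v (n+1)" if y: "y \<in> carrier_vec (m+1)" and "U *\<^sub>v (X *\<^sub>v y) = 0\<^sub>v (m+1)" for y
  proof -
    have "X *\<^sub>v y \<in> colspace (base_pstar n m)" using that Xc Uker[symmetric] by auto
    moreover have "X *\<^sub>v y \<in> colspace (base_p n m)" using inX[OF y] Xcs by simp
    ultimately show ?thesis using disjoint_p[OF m] by blast
  qed
  have pl1: "(X * minv (U * X) * U) *\<^sub>v (X *\<^sub>v y) = X *\<^sub>v y" if "y \<in> carrier_vec (m+1)" for y
    by (rule proj_lemma(1)[OF Xc Uc Xinj disj that])
  have pl2: "(X * minv (U * X) * U) *\<^sub>v z = 0\<^sub>v (n+1)" if "z \<in> carrier_vec (n+1)" "U *\<^sub>v z = 0\<^sub>v (m+1)" for z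
    by (rule proj_lemma(2)[OF Xc Uc Xinj disj that])
  show "minv (U * X) \<in> carrier_mat (m+1) (m+1)"
    by (rule proj_minv_carrier[OF Xc Uc Xinj disj])
  then have Pc: "X * minv (U * X) * U \<in> carrier_mat (n+1) (n+1)" using Xc Uc by simp
  show "X * minv (U * X) * U = Em n m"
  proof (rule mat_eq_vecI[OF Pc])
    fix v :: "real vec" assume v: "v \<in> carrier_vec (n+1)"
    let ?P = "X * minv (U * X) * U"
    let ?a = "Em n m *\<^sub>v v" and ?b = "v - Em n m *\<^sub>v v"
    have a: "?a \<in> colspace X" using split_vec(1)[OF m v] Xcs by simp
    then obtain y where y: "y \<in> carrier_vec (m+1)" and ya: "?a = X *\<^sub>v y"
      unfolding colspace_def using Xc by auto
    have Pa: "?P *\<^sub>v ?a = ?a" using pl1[OF y] ya by simp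
    have "?b \<in> {x \<in> carrier_vec (n+1). U *\<^sub>v x = 0\<^sub>v (m+1)}" using split_vec(2)[OF m v] Uker by simp
    then have Pb: "?P *\<^sub>v ?b = 0\<^sub>v (n+1)" using pl2 by auto
    have ac: "?a \<in> carrier_vec (n+1)" using Em_vec_carrier[OF v] .
    have bc: "?b \<in> carrier_vec (n+1)" using v ac by simp
    have "?P *\<^sub>v v = ?P *\<^sub>v (?a + ?b)" using split_vec(3)[OF m v] by simp
    also have "\<dots> = ?P *\<^sub>v ?a + ?P *\<^sub>v ?b" by (rule mult_add_distrib_mat_vec[OF Pc ac bc])
    also have "\<dots> = ?a" using Pa Pb ac by simp
    finally show "?P *\<^sub>v v = Em n m *\<^sub>v v" .
  qed (rule carriers(3))
qed

lemma vec_minus_zero_eq: fixes w1 w2 :: "real vec"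
  assumes "w1 \<in> carrier_vec d" "w2 \<in> carrier_vec d" "w1 - w2 = 0\<^sub>v d" shows "w1 = w2"
proof (rule eq_vecI)
  fix i assume i: "i < dim_vec w2"
  have "(w1 - w2) $ i = 0" using assms(3) i assms(2) by simp
  moreover have "(w1 - w2) $ i = w1 $ i - w2 $ i" using i by simp
  ultimately show "w1 $ i = w2 $ i" by simp
qed (use assms in simp)

lemma P2_lemma: assumes m: "m < n" and s: "l1 (Nm n om) < 1"
  and Y: "is_matrix_coords n m Y (base_p' n m om)" and V: "is_tangential_coords n m V (base_pstar' n m om)"
  shows "(Y * minv (V * Y) * V) * Mm n om = Mm n om * Em n m" and "minv (V * Y) \<in> carrier_mat (m+1) (m+1)"
proof -
  let ?M = "Mm n om"
  have Mc: "?M \<in> carrier_mat (n+1) (n+1)" by (rule carriers(2))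
  have Bc: "base_p n m \<in> carrier_mat (n+1) (m+1)" by (rule carriers(4))
  have Bsc: "base_pstar n m \<in> carrier_mat (n+1) (n-m)" by (rule carriers(5))
  from Y have Yc: "Y \<in> carrier_mat (n+1) (m+1)"
    and Yinj: "\<And>y. y \<in> carrier_vec (m+1) \<Longrightarrow> Y *\<^sub>v y = 0\<^sub>v (n+1) \<Longrightarrow> y = 0\<^sub>v (m+1)"
    and Ycs: "colspace Y = colspace (?M * base_p n m)"
    unfolding is_matrix_coords_def base_p'_eq[OF m] by auto
  from V have Vc: "V \<in> carrier_mat (m+1) (n+1)"
    and Vker: "{x \<in> carrier_vec (n+1). V *\<^sub>v x = 0\<^sub>v (m+1)} = colspace (?M * base_pstar n m)"
    unfolding is_tangential_coords_def base_pstar'_eq[OF m] by auto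
  have Minj: "w = 0\<^sub>v (n+1)" if "w \<in> carrier_vec (n+1)" "?M *\<^sub>v w = 0\<^sub>v (n+1)" for w
    using Mm_inj[OF s that] .
  have disj: "Y *\<^sub>v y = 0\<^sub>v (n+1)" if y: "y \<in> carrier_vec (m+1)" and VY: "V *\<^sub>v (Y *\<^sub>v y) = 0\<^sub>v (m+1)" for y
  proof -
    have "Y *\<^sub>v y \<in> colspace Y" unfolding colspace_iff using Yc y by auto
    then have "Y *\<^sub>v y \<in> colspace (?M * base_p n m)" using Ycs by simp
    then obtain w1 where w1: "w1 \<in> colspace (base_p n m)" "Y *\<^sub>v y = ?M *\<^sub>v w1"
      using colspace_mult[OF Mc Bc] by blast
    have "Y *\<^sub>v y \<in> {x \<in> carrier_vec (n+1). V *\<^sub>v x = 0\<^sub>v (m+1)}" using Yc y VY by simp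
    then have "Y *\<^sub>v y \<in> colspace (?M * base_pstar n m)" unfolding Vker[symmetric] .
    then obtain w2 where w2: "w2 \<in> colspace (base_pstar n m)" "Y *\<^sub>v y = ?M *\<^sub>v w2"
      using colspace_mult[OF Mc Bsc] by blast
    have w1c: "w1 \<in> carrier_vec (n+1)" by (rule colspace_carrier[OF Bc w1(1)])
    have w2c: "w2 \<in> carrier_vec (n+1)" by (rule colspace_carrier[OF Bsc w2(1)])
    have "?M *\<^sub>v (w1 - w2) = ?M *\<^sub>v w1 - ?M *\<^sub>v w2" by (rule mult_minus_distrib_mat_vec[OF Mc w1c w2c])
    also have "\<dots> = 0\<^sub>v (n+1)"
    proof -
      have "?M *\<^sub>v w1 \<in> carrier_vec (n+1)" using Mc w1c by simp
      then show ?thesis using w1(2) w2(2) minus_cancel_vec by metis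
    qed
    finally have "w1 - w2 = 0\<^sub>v (n+1)" using Minj w1c w2c by simp
    then have "w1 = w2" using vec_minus_zero_eq[OF w1c w2c] by simp
    then have "w1 = 0\<^sub>v (n+1)" using disjoint_p[OF m w1(1)] w2(1) by simp
    then show ?thesis using w1(2) Mc by simp
  qed
  have pl1: "(Y * minv (V * Y) * V) *\<^sub>v (Y *\<^sub>v y) = Y *\<^sub>v y" if "y \<in> carrier_vec (m+1)" for y
    by (rule proj_lemma(1)[OF Yc Vc Yinj disj that])
  have pl2: "(Y * minv (V * Y) * V) *\<^sub>v z = 0\<^sub>v (n+1)" if "z \<in> carrier_vec (n+1)" "V *\<^sub>v z = 0\<^sub>v (m+1)" for z
    by (rule proj_lemma(2)[OF Yc Vc Yinj disj that])
  show Cc: "minv (V * Y) \<in> carrier_mat (m+1) (m+1)"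
    by (rule proj_minv_carrier[OF Yc Vc Yinj disj])
  let ?P = "Y * minv (V * Y) * V"
  have Pc: "?P \<in> carrier_mat (n+1) (n+1)" using Yc Vc Cc by simp
  have PMc: "?P * ?M \<in> carrier_mat (n+1) (n+1)" using Pc Mc by simp
  have MEc: "?M * Em n m \<in> carrier_mat (n+1) (n+1)" using Mc carriers(3) by (rule mult_carrier_mat)
  show "?P * ?M = ?M * Em n m"
  proof (rule mat_eq_vecI[OF PMc MEc])
    fix v :: "real vec" assume v: "v \<in> carrier_vec (n+1)"
    let ?a = "Em n m *\<^sub>v v" and ?b = "v - Em n m *\<^sub>v v"
    have ac: "?a \<in> carrier_vec (n+1)" using Em_vec_carrier[OF v] .
    have bc: "?b \<in> carrier_vec (n+1)" using v ac by simp
    have "?M *\<^sub>v ?a \<in> colspace (?M * base_p n m)"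
      using colspace_mult[OF Mc Bc] split_vec(1)[OF m v] by blast
    then have "?M *\<^sub>v ?a \<in> colspace Y" using Ycs by simp
    then obtain y where y: "y \<in> carrier_vec (m+1)" and ya: "?M *\<^sub>v ?a = Y *\<^sub>v y"
      unfolding colspace_iff using Yc by auto
    have Pa: "?P *\<^sub>v (?M *\<^sub>v ?a) = ?M *\<^sub>v ?a" using pl1[OF y] ya by simp
    have "?M *\<^sub>v ?b \<in> colspace (?M * base_pstar n m)"
      using colspace_mult[OF Mc Bsc] split_vec(2)[OF m v] by blast
    then have "?M *\<^sub>v ?b \<in> {x \<in> carrier_vec (n+1). V *\<^sub>v x = 0\<^sub>v (m+1)}" using Vker by simp
    then have Pb: "?P *\<^sub>v (?M *\<^sub>v ?b) = 0\<^sub>v (n+1)" using pl2 by auto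
    have Mac: "?M *\<^sub>v ?a \<in> carrier_vec (n+1)" using Mc ac by simp
    have Mbc: "?M *\<^sub>v ?b \<in> carrier_vec (n+1)" using Mc bc by simp
    have "(?P * ?M) *\<^sub>v v = ?P *\<^sub>v (?M *\<^sub>v v)" by (rule assoc_mult_mat_vec[OF Pc Mc v])
    also have "?M *\<^sub>v v = ?M *\<^sub>v ?a + ?M *\<^sub>v ?b"
      using split_vec(3)[OF m v] mult_add_distrib_mat_vec[OF Mc ac bc] by simp
    also have "?P *\<^sub>v (?M *\<^sub>v ?a + ?M *\<^sub>v ?b) = ?P *\<^sub>v (?M *\<^sub>v ?a) + ?P *\<^sub>v (?M *\<^sub>v ?b)"
      by (rule mult_add_distrib_mat_vec[OF Pc Mac Mbc])
    also have "\<dots> = ?M *\<^sub>v ?a" using Pa Pb Mac by simp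
    also have "\<dots> = (?M * Em n m) *\<^sub>v v" using assoc_mult_mat_vec[OF Mc carriers(3) v] by simp
    finally show "(?P * ?M) *\<^sub>v v = (?M * Em n m) *\<^sub>v v" .
  qed
qed

lemma cross_ratio_split:
  fixes X U Y V C1 C2 :: "real mat"
  assumes X: "X \<in> carrier_mat d k" and U: "U \<in> carrier_mat k d" and Y: "Y \<in> carrier_mat d k"
    and V: "V \<in> carrier_mat k d" and C1: "minv (U * X) \<in> carrier_mat k k" and C2: "minv (V * Y) \<in> carrier_mat k k"
  shows "cross_ratio X U Y V = (X * minv (U * X) * U) * (Y * minv (V * Y) * V)"
proof -
  let ?C1 = "minv (U * X)" and ?C2 = "minv (V * Y)"
  have XC: "X * ?C1 \<in> carrier_mat d k" using X C1 by simp
  have P: "X * ?C1 * U \<in> carrier_mat d d" using XC U by simp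
  have YC: "Y * ?C2 \<in> carrier_mat d k" using Y C2 by simp
  have a: "X * ?C1 * (U * Y) = X * ?C1 * U * Y" using assoc_mult_mat[OF XC U Y] by simp
  have b: "X * ?C1 * U * Y * ?C2 = (X * ?C1 * U) * (Y * ?C2)" by (rule assoc_mult_mat[OF P Y C2])
  have c: "(X * ?C1 * U) * (Y * ?C2) * V = (X * ?C1 * U) * (Y * ?C2 * V)" by (rule assoc_mult_mat[OF P YC V])
  show ?thesis unfolding cross_ratio_def a b c ..
qed

lemma Nm_index: "i < n+1 \<Longrightarrow> j < n+1 \<Longrightarrow> Nm n om $$ (i,j) = om j i"
  by (simp add: Nm_def)

lemma tr_ENE: assumes A: "A \<in> carrier_mat (n+1) (n+1)"
  shows "mtrace (Em n m * A * Em n m) = mtrace (Em n m * A)"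
proof -
  have EA: "Em n m * A \<in> carrier_mat (n+1) (n+1)" using A carriers(3) by (metis mult_carrier_mat)
  have "mtrace (Em n m * A * Em n m) = (\<Sum>i<n+1. (Em n m * A * Em n m) $$ (i,i))"
    unfolding mtrace_def using EA by simp
  also have "\<dots> = (\<Sum>i<n+1. (Em n m * A) $$ (i,i))"
  proof (rule sum.cong[OF refl])
    fix i assume "i \<in> {..<n+1}"
    then have i: "i < n+1" by simp
    show "(Em n m * A * Em n m) $$ (i,i) = (Em n m * A) $$ (i,i)"
      using Em_right[OF EA i i, of m] Em_left[OF A i i, of m] by simp
  qed
  also have "\<dots> = mtrace (Em n m * A)" unfolding mtrace_def using EA by simp
  finally show ?thesis .
qed

lemma sum_if_le: fixes m n :: nat assumes "m < n"
  shows "(\<Sum>i<n+1. if i \<le> m then f i else 0) = (\<Sum>i\<in>{0..m}. f i)"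
proof -
  have "(\<Sum>i<n+1. if i \<le> m then f i else 0) = (\<Sum>i\<in>{x \<in> {..<n+1}. x \<le> m}. f i)"
    by (rule sum.inter_filter[symmetric]) simp
  also have "{x \<in> {..<n+1}. x \<le> m} = {0..m}" using assms by auto
  finally show ?thesis .
qed

lemma sum_if_gt: fixes m n :: nat assumes "m < n"
  shows "(\<Sum>k<n+1. if m < k then f k else 0) = (\<Sum>k\<in>{m+1..n}. f k)"
proof -
  have "(\<Sum>k<n+1. if m < k then f k else 0) = (\<Sum>k\<in>{x \<in> {..<n+1}. m < x}. f k)"
    by (rule sum.inter_filter[symmetric]) simp
  also have "{x \<in> {..<n+1}. m < x} = {m+1..n}" using assms by auto
  finally show ?thesis .
qed

lemma g_eq: assumes m: "m < n"
  shows "mtrace (Em n m * Nm n om * Nm n om) - mtrace (Em n m * Nm n om * Em n m * Nm n om) = gform n m om"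
proof -
  let ?E = "Em n m" and ?N = "Nm n om"
  have Nc: "?N \<in> carrier_mat (n+1) (n+1)" by (rule carriers(1))
  have Ec: "?E \<in> carrier_mat (n+1) (n+1)" by (rule carriers(3))
  have EN: "?E * ?N \<in> carrier_mat (n+1) (n+1)" using Ec Nc by (rule mult_carrier_mat)
  have ENE: "?E * ?N * ?E \<in> carrier_mat (n+1) (n+1)" using EN Ec by (rule mult_carrier_mat)
  have ENN: "?E * ?N * ?N \<in> carrier_mat (n+1) (n+1)" using EN Nc by (rule mult_carrier_mat)
  have ENEN: "?E * ?N * ?E * ?N \<in> carrier_mat (n+1) (n+1)" using ENE Nc by (rule mult_carrier_mat)
  have t1: "mtrace (?E * ?N * ?N) = (\<Sum>i<n+1. \<Sum>k<n+1. (if i \<le> m then om k i else 0) * om i k)"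
  proof -
    have "mtrace (?E * ?N * ?N) = (\<Sum>i<n+1. (?E * ?N * ?N) $$ (i,i))"
      unfolding mtrace_def using ENN by simp
    also have "\<dots> = (\<Sum>i<n+1. \<Sum>k<n+1. (if i \<le> m then om k i else 0) * om i k)"
    proof (rule sum.cong[OF refl])
      fix i assume "i \<in> {..<n+1}" then have i: "i < n+1" by simp
      have "(?E * ?N * ?N) $$ (i,i) = (\<Sum>k<n+1. (?E * ?N) $$ (i,k) * ?N $$ (k,i))"
        by (rule mult_index'[OF EN Nc i i])
      also have "\<dots> = (\<Sum>k<n+1. (if i \<le> m then om k i else 0) * om i k)"
      proof (rule sum.cong[OF refl])
        fix k assume "k \<in> {..<n+1}" then have k: "k < n+1" by simp
        show "(?E * ?N) $$ (i,k) * ?N $$ (k,i) = (if i \<le> m then om k i else 0) * om i k"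
          using Em_left[OF Nc i k, of m] Nm_index[OF i k, of om] Nm_index[OF k i, of om] by simp
      qed
      finally show "(?E * ?N * ?N) $$ (i,i) = (\<Sum>k<n+1. (if i \<le> m then om k i else 0) * om i k)" .
    qed
    finally show ?thesis .
  qed
  have t2: "mtrace (?E * ?N * ?E * ?N) = (\<Sum>i<n+1. \<Sum>k<n+1. (if k \<le> m then (if i \<le> m then om k i else 0) else 0) * om i k)"
  proof -
    have "mtrace (?E * ?N * ?E * ?N) = (\<Sum>i<n+1. (?E * ?N * ?E * ?N) $$ (i,i))"
      unfolding mtrace_def using ENEN by simp
    also have "\<dots> = (\<Sum>i<n+1. \<Sum>k<n+1. (if k \<le> m then (if i \<le> m then om k i else 0) else 0) * om i k)"
    proof (rule sum.cong[OF refl])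
      fix i assume "i \<in> {..<n+1}" then have i: "i < n+1" by simp
      have "(?E * ?N * ?E * ?N) $$ (i,i) = (\<Sum>k<n+1. (?E * ?N * ?E) $$ (i,k) * ?N $$ (k,i))"
        by (rule mult_index'[OF ENE Nc i i])
      also have "\<dots> = (\<Sum>k<n+1. (if k \<le> m then (if i \<le> m then om k i else 0) else 0) * om i k)"
      proof (rule sum.cong[OF refl])
        fix k assume "k \<in> {..<n+1}" then have k: "k < n+1" by simp
        show "(?E * ?N * ?E) $$ (i,k) * ?N $$ (k,i) = (if k \<le> m then (if i \<le> m then om k i else 0) else 0) * om i k"
          using Em_right[OF EN i k, of m] Em_left[OF Nc i k, of m] Nm_index[OF i k, of om] Nm_index[OF k i, of om] by simp
      qed
      finally show "(?E * ?N * ?E * ?N) $$ (i,i) = (\<Sum>k<n+1. (if k \<le> m then (if i \<le> m then om k i else 0) else 0) * om i k)" .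
    qed
    finally show ?thesis .
  qed
  have "mtrace (?E * ?N * ?N) - mtrace (?E * ?N * ?E * ?N)
      = (\<Sum>i<n+1. (\<Sum>k<n+1. (if i \<le> m then om k i else 0) * om i k) -
          (\<Sum>k<n+1. (if k \<le> m then (if i \<le> m then om k i else 0) else 0) * om i k))"
    by (simp only: t1 t2 sum_subtractf)
  also have "\<dots> = (\<Sum>i<n+1. if i \<le> m then (\<Sum>k<n+1. if m < k then om k i * om i k else 0) else 0)"
  proof (rule sum.cong[OF refl])
    fix i assume "i \<in> {..<n+1}"
    show "(\<Sum>k<n+1. (if i \<le> m then om k i else 0) * om i k) -
          (\<Sum>k<n+1. (if k \<le> m then (if i \<le> m then om k i else 0) else 0) * om i k)
        = (if i \<le> m then (\<Sum>k<n+1. if m < k then om k i * om i k else 0) else 0)"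
    proof (cases "i \<le> m")
      case True
      have "(\<Sum>k<n+1. (if i \<le> m then om k i else 0) * om i k) -
          (\<Sum>k<n+1. (if k \<le> m then (if i \<le> m then om k i else 0) else 0) * om i k)
          = (\<Sum>k<n+1. (if i \<le> m then om k i else 0) * om i k -
             (if k \<le> m then (if i \<le> m then om k i else 0) else 0) * om i k)"
        by (simp only: sum_subtractf)
      also have "\<dots> = (\<Sum>k<n+1. if m < k then om k i * om i k else 0)"
        by (rule sum.cong[OF refl]) (use True in auto)
      finally show ?thesis using True by simp
    next
      case False
      have z1: "(\<Sum>k<n+1. (if k \<le> m then (if i \<le> m then om k i else 0) else 0) * om i k) = 0"
        by (rule sum.neutral) (use False in simp)
      have z2: "(\<Sum>k<n+1. (if i \<le> m then om k i else 0) * om i k) = 0"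
        by (rule sum.neutral) (use False in simp)
      show ?thesis unfolding z1 z2 using False by simp
    qed
  qed
  also have "\<dots> = (\<Sum>i\<in>{0..m}. \<Sum>k\<in>{m+1..n}. om k i * om i k)"
    by (simp only: sum_if_le[OF m] sum_if_gt[OF m])
  also have "\<dots> = gform n m om"
    unfolding gform_def by (rule sum.swap)
  finally show ?thesis .
qed

lemma final_est:
  fixes a c s q g e \<epsilon> :: real
  assumes c1: "1 \<le> c" and a1: "1 \<le> a" and ac: "a \<le> c" and s0: "0 \<le> s" and s1: "s \<le> 1/2"
    and q0: "0 \<le> q"
    and sB: "s * (12 * c^3) \<le> 1"
    and sD: "s * ((72 * c^7 + 4 * c^3) * c^4) \<le> \<epsilon>"
    and sq: "s^2 \<le> c^4 * q"
    and hg: "\<bar>g\<bar> \<le> 2 * c^2 * s^2" and he: "\<bar>e\<bar> \<le> 4 * c^3 * s^3"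
  shows "\<bar>a * ln ((a + g + e) / a) - g\<bar> \<le> \<epsilon> * q"
proof -
  define x where "x = (g + e) / a"
  have a0: "0 < a" using a1 by simp
  have c0: "0 < c" using c1 by simp
  have arg: "(a + g + e) / a = 1 + x" unfolding x_def using a0 by (simp add: field_simps)
  have c23: "c^2 \<le> c^3" using c1 by (simp add: power_increasing)
  have s32: "s^3 \<le> s^2" using s0 s1 by (simp add: power_decreasing)
  have s43: "s^4 \<le> s^3" using s0 s1 by (simp add: power_decreasing)
  have "2 * c^2 * s^2 \<le> 2 * c^3 * s^2" using c23 s0 by (simp add: mult_right_mono)
  moreover have "4 * c^3 * s^3 \<le> 4 * c^3 * s^2" using s32 c0 by (simp add: mult_left_mono)
  ultimately have ge: "\<bar>g + e\<bar> \<le> 6 * c^3 * s^2" using hg he abs_triangle_ineq[of g e] by linarith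
  have xa: "\<bar>x\<bar> \<le> \<bar>g + e\<bar>"
  proof -
    have "\<bar>x\<bar> = \<bar>g + e\<bar> / a" unfolding x_def using a0 by (simp add: abs_divide)
    moreover have "\<bar>g + e\<bar> * 1 \<le> \<bar>g + e\<bar> * a" by (rule mult_left_mono) (use a1 in auto)
    ultimately show ?thesis using a0 by (simp add: divide_le_eq)
  qed
  have xb: "\<bar>x\<bar> \<le> 6 * c^3 * s^2" using xa ge by linarith
  have "6 * c^3 * s \<le> 1/2" using sB by (simp add: algebra_simps)
  then have "6 * c^3 * s * s \<le> 1/2 * s" using s0 by (rule mult_right_mono)
  then have "6 * c^3 * s^2 \<le> 1/2" using s1 by (simp add: power2_eq_square mult.assoc)
  then have xh: "\<bar>x\<bar> \<le> 1/2" using xb by linarith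
  have ln: "\<bar>ln (1 + x) - x\<bar> \<le> 2 * x^2" by (rule abs_ln_one_plus_x_minus_x_bound[OF xh])
  have ax: "a * x = g + e" unfolding x_def using a0 by simp
  have "a * ln ((a + g + e) / a) - g = a * (ln (1 + x) - x) + e" unfolding arg using ax
    by (simp add: algebra_simps)
  then have "\<bar>a * ln ((a + g + e) / a) - g\<bar> \<le> \<bar>a * (ln (1 + x) - x)\<bar> + \<bar>e\<bar>"
    by (simp only: abs_triangle_ineq)
  also have "\<bar>a * (ln (1 + x) - x)\<bar> = a * \<bar>ln (1 + x) - x\<bar>" using a0 by (simp add: abs_mult)
  also have "a * \<bar>ln (1 + x) - x\<bar> + \<bar>e\<bar> \<le> c * (2 * x^2) + 4 * c^3 * s^3"
    using ln ac he a0 by (intro add_mono mult_mono) auto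
  also have "c * (2 * x^2) + 4 * c^3 * s^3 \<le> c * (2 * (6 * c^3 * s^2)^2) + 4 * c^3 * s^3"
  proof -
    have "x^2 \<le> (6 * c^3 * s^2)^2"
    proof -
      have "\<bar>x\<bar>^2 \<le> (6 * c^3 * s^2)^2" by (rule power_mono[OF xb]) simp
      then show ?thesis by simp
    qed
    then show ?thesis using c0 by simp
  qed
  also have "c * (2 * (6 * c^3 * s^2)^2) = 72 * c^7 * s^4"
    by (simp add: eval_nat_numeral)
  also have "72 * c^7 * s^4 + 4 * c^3 * s^3 \<le> (72 * c^7 + 4 * c^3) * s^3"
    using s43 c0 by (simp add: algebra_simps)
  also have "\<dots> = (72 * c^7 + 4 * c^3) * s * s^2" by (simp add: power2_eq_square power3_eq_cube)
  also have "\<dots> \<le> (72 * c^7 + 4 * c^3) * s * (c^4 * q)"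
    using sq c0 s0 by (intro mult_left_mono) auto
  also have "\<dots> = (s * ((72 * c^7 + 4 * c^3) * c^4)) * q" by (simp add: algebra_simps)
  also have "\<dots> \<le> \<epsilon> * q" using sD q0 by (rule mult_right_mono)
  finally show ?thesis .
qed

lemma l1_mult_le: fixes A B :: "real mat"
  assumes A: "A \<in> carrier_mat d d" and B: "B \<in> carrier_mat d d" and "l1 A \<le> a" "l1 B \<le> b"
  shows "l1 (A * B) \<le> a * b"
proof -
  have "l1 (A * B) \<le> l1 A * l1 B" by (rule l1_mult[OF A B])
  also have "\<dots> \<le> a * b"
    by (rule mult_mono) (use assms l1_nonneg[of A] l1_nonneg[of B] in auto)
  finally show ?thesis .
qed

lemma l1_K: fixes N K :: "real mat"
  assumes N: "N \<in> carrier_mat d d" and K: "K \<in> carrier_mat d d" and KK: "K = 1\<^sub>m d - N * K"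
    and s: "l1 N \<le> 1/2"
  shows "l1 K \<le> 2 * real d"
proof -
  have NK: "N * K \<in> carrier_mat d d" using N K by simp
  have "l1 K = l1 (1\<^sub>m d - N * K)" using KK by (rule arg_cong[where f = l1])
  also have "\<dots> \<le> l1 (1\<^sub>m d) + l1 (N * K)" by (rule l1_minus[OF one_carrier_mat NK])
  also have "\<dots> \<le> real d + l1 N * l1 K" using l1_mult[OF N K] by (simp add: l1_one)
  also have "l1 N * l1 K \<le> 1/2 * l1 K" using s l1_nonneg[of K] by (rule mult_right_mono)
  finally show ?thesis by simp
qed

lemma trace_W: assumes m: "m < n" and s: "l1 (Nm n om) < 1"
  and X: "is_matrix_coords n m X (base_p n m)" and U: "is_tangential_coords n m U (base_pstar n m)"
  and Y: "is_matrix_coords n m Y (base_p' n m om)" and V: "is_tangential_coords n m V (base_pstar' n m om)"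
  obtains K where "K \<in> carrier_mat (n+1) (n+1)" "K = 1\<^sub>m (n+1) - Nm n om * K"
    "mtrace (cross_ratio X U Y V) = real (m+1) + gform n m om
       - mtrace (Em n m * Nm n om * Nm n om * Nm n om * K)
       + mtrace (Em n m * Nm n om * Em n m * Nm n om * Nm n om * K)"
proof -
  let ?M = "Mm n om" and ?N = "Nm n om" and ?E = "Em n m"
  have Mc: "?M \<in> carrier_mat (n+1) (n+1)" by (rule carriers(2))
  have Nc: "?N \<in> carrier_mat (n+1) (n+1)" by (rule carriers(1))
  have Ec: "?E \<in> carrier_mat (n+1) (n+1)" by (rule carriers(3))
  have "minv ?M \<in> carrier_mat (n+1) (n+1) \<and> ?M * minv ?M = 1\<^sub>m (n+1) \<and> minv ?M * ?M = 1\<^sub>m (n+1)"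
    by (rule inj_square_minv[OF Mc]) (rule Mm_inj[OF s])
  then have Kc: "minv ?M \<in> carrier_mat (n+1) (n+1)" and MK: "?M * minv ?M = 1\<^sub>m (n+1)" by auto
  define K where "K = minv ?M"
  have Kc: "K \<in> carrier_mat (n+1) (n+1)" using Kc K_def by simp
  have MK: "?M * K = 1\<^sub>m (n+1)" using MK K_def by simp
  have MK': "(1\<^sub>m (n+1) + ?N) * K = 1\<^sub>m (n+1)" using MK unfolding Mm_def .
  have KK: "K = 1\<^sub>m (n+1) - ?N * K" by (rule K_eq[OF Nc Kc MK'])
  from X have Xc: "X \<in> carrier_mat (n+1) (m+1)" unfolding is_matrix_coords_def by auto
  from Y have Yc: "Y \<in> carrier_mat (n+1) (m+1)" unfolding is_matrix_coords_def by auto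
  from U have Uc: "U \<in> carrier_mat (m+1) (n+1)" unfolding is_tangential_coords_def by auto
  from V have Vc: "V \<in> carrier_mat (m+1) (n+1)" unfolding is_tangential_coords_def by auto
  note P1 = P1_lemma[OF m X U]
  note P2 = P2_lemma[OF m s Y V]
  let ?P = "Y * minv (V * Y) * V"
  have Pc: "?P \<in> carrier_mat (n+1) (n+1)" using Yc Vc P2(2) by simp
  have "?P = ?P * 1\<^sub>m (n+1)" using right_mult_one_mat[OF Pc] by simp
  also have "\<dots> = ?P * (?M * K)" using MK by simp
  also have "\<dots> = (?P * ?M) * K" using assoc_mult_mat[OF Pc Mc Kc] by simp
  also have "\<dots> = ?M * ?E * K" using P2(1) by simp
  finally have P2eq: "?P = ?M * ?E * K" .
  have W: "cross_ratio X U Y V = ?E * ((1\<^sub>m (n+1) + ?N) * ?E * K)"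
    using cross_ratio_split[OF Xc Uc Yc Vc P1(2) P2(2)] P1(1) P2eq unfolding Mm_def by simp
  have TI: "mtrace (?E * ((1\<^sub>m (n+1) + ?N) * ?E * K)) = mtrace ?E + (mtrace (?E*?N*?N) - mtrace (?E*?N*?E*?N))
     + (mtrace (?E*?N*?E) - mtrace (?E*?N)) - mtrace (?E*?N*?N*?N*K) + mtrace (?E*?N*?E*?N*?N*K)"
    by (rule trace_identity[OF Ec Nc Kc Em_Em KK])
  show ?thesis
  proof (rule that[OF Kc KK])
    show "mtrace (cross_ratio X U Y V) = real (m+1) + gform n m om
       - mtrace (?E * ?N * ?N * ?N * K) + mtrace (?E * ?N * ?E * ?N * ?N * K)"
      unfolding W TI mtrace_Em[OF m] g_eq[OF m] tr_ENE[OF Nc] by simp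
  qed
qed

lemma omsq_nonneg: "0 \<le> omsq n om"
  unfolding omsq_def by (intro sum_nonneg) auto

theorem theorem1:
  fixes n m :: nat and X U :: "real mat"
    and Yf Vf :: "(nat \<Rightarrow> nat \<Rightarrow> real) \<Rightarrow> real mat"
  assumes "m < n"
    and "is_matrix_coords n m X (base_p n m)"
    and "is_tangential_coords n m U (base_pstar n m)"
    and "\<exists>r>0. \<forall>om. omsq n om < r \<longrightarrow>
            is_matrix_coords n m (Yf om) (base_p' n m om) \<and>
            is_tangential_coords n m (Vf om) (base_pstar' n m om)"
  shows "\<forall>\<epsilon>>0. \<exists>\<delta>>0. \<forall>om. omsq n om < \<delta> \<longrightarrow>
           \<bar>real (m+1) * ln (mtrace (cross_ratio X U (Yf om) (Vf om)) / real (m+1))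
              - gform n m om\<bar> \<le> \<epsilon> * omsq n om"
proof (intro allI impI)
  fix \<epsilon> :: real assume \<epsilon>: "\<epsilon> > 0"
  have m: "m < n" by (rule assms(1))
  obtain r where r: "r > 0" and hr: "\<And>om. omsq n om < r \<Longrightarrow>
            is_matrix_coords n m (Yf om) (base_p' n m om) \<and>
            is_tangential_coords n m (Vf om) (base_pstar' n m om)" using assms(4) by blast
  define c where "c = real (n+1)"
  have c1: "1 \<le> c" unfolding c_def by simp
  have c0: "0 < c" using c1 by simp
  define D where "D = (72 * c^7 + 4 * c^3) * c^4"
  have D0: "0 < D" unfolding D_def using c0 by (intro mult_pos_pos add_pos_pos) simp_all
  define \<sigma> where "\<sigma> = min (1/2) (min (1 / (12 * c^3)) (\<epsilon> / D))"
  have \<sigma>0: "\<sigma> > 0" unfolding \<sigma>_def using c0 D0 \<epsilon> by simp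
  define \<delta> where "\<delta> = min r ((\<sigma> / c^2)^2)"
  have \<delta>0: "\<delta> > 0" unfolding \<delta>_def using r \<sigma>0 c0 by simp
  show "\<exists>\<delta>>0. \<forall>om. omsq n om < \<delta> \<longrightarrow>
           \<bar>real (m+1) * ln (mtrace (cross_ratio X U (Yf om) (Vf om)) / real (m+1))
              - gform n m om\<bar> \<le> \<epsilon> * omsq n om"
  proof (intro exI[of _ \<delta>] conjI allI impI)
    show "\<delta> > 0" by (rule \<delta>0)
    fix om assume q: "omsq n om < \<delta>"
    define q where "q = omsq n om"
    have q0: "0 \<le> q" unfolding q_def by (rule omsq_nonneg)
    have qr: "omsq n om < r" using q unfolding \<delta>_def by simp
    have Y: "is_matrix_coords n m (Yf om) (base_p' n m om)" using hr[OF qr] by simp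
    have V: "is_tangential_coords n m (Vf om) (base_pstar' n m om)" using hr[OF qr] by simp
    have "sqrt q < sqrt ((\<sigma> / c^2)^2)" using q unfolding q_def \<delta>_def by (intro real_sqrt_less_mono) simp
    then have sq: "sqrt q < \<sigma> / c^2" using \<sigma>0 c0 by simp
    define s where "s = l1 (Nm n om)"
    have s0: "0 \<le> s" unfolding s_def by (rule l1_nonneg)
    have s_le: "s \<le> c^2 * sqrt q" unfolding s_def c_def q_def using l1_Nm[of n om] by simp
    have "c^2 * sqrt q \<le> c^2 * (\<sigma> / c^2)" using sq c0 by (intro mult_left_mono) auto
    then have s\<sigma>: "s \<le> \<sigma>" using s_le c0 by simp
    have s12: "s \<le> 1/2" using s\<sigma> unfolding \<sigma>_def by simp
    have "s \<le> 1 / (12 * c^3)" using s\<sigma> unfolding \<sigma>_def by simp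
    then have sB: "s * (12 * c^3) \<le> 1" using c0 by (simp add: le_divide_eq)
    have "s \<le> \<epsilon> / D" using s\<sigma> unfolding \<sigma>_def by simp
    then have sD: "s * ((72 * c^7 + 4 * c^3) * c^4) \<le> \<epsilon>" using D0 unfolding D_def by (simp add: le_divide_eq)
    have sqq: "s^2 \<le> c^4 * q"
    proof -
      have "s^2 \<le> (c^2 * sqrt q)^2" using s_le s0 by (rule power_mono)
      also have "\<dots> = c^4 * q" using q0 by (simp add: power_mult_distrib flip: power_mult)
      finally show ?thesis .
    qed
    have s1: "l1 (Nm n om) < 1" using s12 unfolding s_def by simp
    let ?E = "Em n m" and ?N = "Nm n om"
    obtain K where Kc: "K \<in> carrier_mat (n+1) (n+1)" and KK: "K = 1\<^sub>m (n+1) - ?N * K"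
      and tr: "mtrace (cross_ratio X U (Yf om) (Vf om)) = real (m+1) + gform n m om
       - mtrace (?E * ?N * ?N * ?N * K) + mtrace (?E * ?N * ?E * ?N * ?N * K)"
      using trace_W[OF m s1 assms(2) assms(3) Y V] by blast
    have Nc: "?N \<in> carrier_mat (n+1) (n+1)" by (rule carriers(1))
    have Ec: "?E \<in> carrier_mat (n+1) (n+1)" by (rule carriers(3))
    have lE: "l1 ?E \<le> c" unfolding c_def by (rule l1_Em)
    have lN: "l1 ?N \<le> s" unfolding s_def by simp
    have lK: "l1 K \<le> 2 * c" unfolding c_def using l1_K[OF Nc Kc KK] s12 unfolding s_def by simp
    have cm: "A * B \<in> carrier_mat (n+1) (n+1)" if "A \<in> carrier_mat (n+1) (n+1)" "B \<in> carrier_mat (n+1) (n+1)" for A B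
      using that by (rule mult_carrier_mat)
    have EN: "?E * ?N \<in> carrier_mat (n+1) (n+1)" and lEN: "l1 (?E * ?N) \<le> c * s"
      using cm[OF Ec Nc] l1_mult_le[OF Ec Nc lE lN] by auto
    have ENN: "?E * ?N * ?N \<in> carrier_mat (n+1) (n+1)" and lENN: "l1 (?E * ?N * ?N) \<le> c * s * s"
      using cm[OF EN Nc] l1_mult_le[OF EN Nc lEN lN] by auto
    have ENNN: "?E * ?N * ?N * ?N \<in> carrier_mat (n+1) (n+1)" and lENNN: "l1 (?E * ?N * ?N * ?N) \<le> c * s * s * s"
      using cm[OF ENN Nc] l1_mult_le[OF ENN Nc lENN lN] by auto
    have ENNNK: "?E * ?N * ?N * ?N * K \<in> carrier_mat (n+1) (n+1)" and lENNNK: "l1 (?E * ?N * ?N * ?N * K) \<le> c * s * s * s * (2 * c)"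
      using cm[OF ENNN Kc] l1_mult_le[OF ENNN Kc lENNN lK] by auto
    have ENE: "?E * ?N * ?E \<in> carrier_mat (n+1) (n+1)" and lENE: "l1 (?E * ?N * ?E) \<le> c * s * c"
      using cm[OF EN Ec] l1_mult_le[OF EN Ec lEN lE] by auto
    have ENEN: "?E * ?N * ?E * ?N \<in> carrier_mat (n+1) (n+1)" and lENEN: "l1 (?E * ?N * ?E * ?N) \<le> c * s * c * s"
      using cm[OF ENE Nc] l1_mult_le[OF ENE Nc lENE lN] by auto
    have ENENN: "?E * ?N * ?E * ?N * ?N \<in> carrier_mat (n+1) (n+1)" and lENENN: "l1 (?E * ?N * ?E * ?N * ?N) \<le> c * s * c * s * s"
      using cm[OF ENEN Nc] l1_mult_le[OF ENEN Nc lENEN lN] by auto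
    have ENENNK: "?E * ?N * ?E * ?N * ?N * K \<in> carrier_mat (n+1) (n+1)" and lENENNK: "l1 (?E * ?N * ?E * ?N * ?N * K) \<le> c * s * c * s * s * (2 * c)"
      using cm[OF ENENN Kc] l1_mult_le[OF ENENN Kc lENENN lK] by auto
    define g where "g = gform n m om"
    define e where "e = - mtrace (?E * ?N * ?N * ?N * K) + mtrace (?E * ?N * ?E * ?N * ?N * K)"
    have g_def': "g = mtrace (?E * ?N * ?N) - mtrace (?E * ?N * ?E * ?N)" unfolding g_def using g_eq[OF m] by simp
    have c23: "c^2 \<le> c^3" using c1 by (simp add: power_increasing)
    have hg: "\<bar>g\<bar> \<le> 2 * c^2 * s^2"
    proof -
      have "\<bar>g\<bar> \<le> \<bar>mtrace (?E * ?N * ?N)\<bar> + \<bar>mtrace (?E * ?N * ?E * ?N)\<bar>" unfolding g_def' by (rule abs_triangle_ineq4)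
      also have "\<dots> \<le> c * s * s + c * s * c * s"
        using mtrace_abs[OF ENN] mtrace_abs[OF ENEN] lENN lENEN by linarith
      also have "c * s * s \<le> c * s * c * s"
      proof -
        have "c * (s * s) \<le> (c * c) * (s * s)" using c1 s0 by (intro mult_right_mono) (auto simp: mult_le_cancel_left1)
        then show ?thesis by (simp add: algebra_simps)
      qed
      then have "c * s * s + c * s * c * s \<le> 2 * c^2 * s^2" by (simp add: power2_eq_square algebra_simps)
      finally show ?thesis .
    qed
    have he: "\<bar>e\<bar> \<le> 4 * c^3 * s^3"
    proof -
      have "\<bar>e\<bar> \<le> \<bar>mtrace (?E * ?N * ?N * ?N * K)\<bar> + \<bar>mtrace (?E * ?N * ?E * ?N * ?N * K)\<bar>"
        unfolding e_def by linarith
      also have "\<dots> \<le> c * s * s * s * (2 * c) + c * s * c * s * s * (2 * c)"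
        using mtrace_abs[OF ENNNK] mtrace_abs[OF ENENNK] lENNNK lENENNK by linarith
      also have "c * s * s * s * (2 * c) = 2 * c^2 * s^3" by (simp add: power2_eq_square power3_eq_cube algebra_simps)
      also have "c * s * c * s * s * (2 * c) = 2 * c^3 * s^3" by (simp add: power3_eq_cube algebra_simps)
      also have "2 * c^2 * s^3 \<le> 2 * c^3 * s^3" using c23 s0 by (simp add: mult_right_mono)
      finally show ?thesis by simp
    qed
    have trW: "mtrace (cross_ratio X U (Yf om) (Vf om)) = real (m+1) + g + e"
      unfolding tr g_def e_def by simp
    have a1: "1 \<le> real (m+1)" by simp
    have ac: "real (m+1) \<le> c" unfolding c_def using m by simp
    show "\<bar>real (m+1) * ln (mtrace (cross_ratio X U (Yf om) (Vf om)) / real (m+1))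
              - gform n m om\<bar> \<le> \<epsilon> * omsq n om"
      unfolding trW g_def[symmetric] q_def[symmetric]
      by (rule final_est[OF c1 a1 ac s0 s12 q0 sB sD sqq hg he])
  qed
qed

end
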